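(* Let $k$ be a positive integer and let $(U,V,E)$ be a finite bipartite graph with parts $U,V$, $|U|=m$ and $|V|=n$. Let $\mathcal{P}$ be a partition of $V$ in which every part has size at most $\frac{n}{2k}$, and suppose each vertex $u\in U$ has neighbours in fewer than $k$ parts of $\mathcal{P}$. Then there exist $A\subseteq U$ and $B\subseteq V$ with $|A|\ge \frac{m}{k}$ and $|B|\ge\frac{n}{2k}$ such that there is no edge between $A$ and $B$. *)

theory Defs
  imports Main "HOL-Library.Disjoint_Sets" Complex_Main
begin

end

theory Submission
  imports Defs
begin

lemma pick_R:
  fixes w :: "'c \<Rightarrow> real"
  assumes "finite Q" "s \<ge> 0" "\<forall>x\<in>Q. w x \<le> s" "\<forall>x\<in>Q. w x \<ge> 0" "sum w Q \<ge> s"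
  shows "\<exists>R\<subseteq>Q. s \<le> sum w R \<and> sum w R \<le> 2 * s"
  using assms
proof (induction Q rule: finite_induct)
  case empty
  then show ?case by auto
next
  case (insert x F)
  show ?case
  proof (cases "sum w F \<ge> s")
    case True
    then obtain R where "R \<subseteq> F" "s \<le> sum w R" "sum w R \<le> 2 * s" using insert by auto
    then show ?thesis by blast
  next
    case False
    then have "sum w (insert x F) \<le> 2 * s" using insert by simp
    then show ?thesis using insert.prems by blast
  qed
qed

lemma groups:
  fixes w :: "'c \<Rightarrow> real"
  assumes "finite Q" "s \<ge> 0" "\<forall>x\<in>Q. w x \<le> s" "\<forall>x\<in>Q. w x \<ge> 0" "sum w Q \<ge> 2 * real j * s"
  shows "\<exists>G :: nat \<Rightarrow> 'c set. (\<forall>i<j. G i \<subseteq> Q \<and> sum w (G i) \<ge> s)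
          \<and> (\<forall>i<j. \<forall>i'<j. i \<noteq> i' \<longrightarrow> G i \<inter> G i' = {})"
  using assms
proof (induction j arbitrary: Q)
  case 0
  then show ?case by auto
next
  case (Suc j)
  have e: "2 * real (Suc j) * s = 2 * real j * s + 2 * s" by (simp add: algebra_simps)
  have "0 \<le> real j * s" using Suc.prems(2) by simp
  then have "sum w Q \<ge> s" using Suc.prems(2,5) e by linarith
  then obtain R where R: "R \<subseteq> Q" "s \<le> sum w R" "sum w R \<le> 2 * s"
    using pick_R[of Q s w] Suc.prems(1-4) by blast
  have "sum w (Q - R) = sum w Q - sum w R"
    using R(1) Suc.prems(1) by (simp add: sum_diff)
  then have "sum w (Q - R) \<ge> 2 * real j * s" using Suc.prems(5) R(3) e by linarith
  moreover have "finite (Q - R)" using Suc.prems(1) by simp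
  moreover have "\<forall>x\<in>Q - R. w x \<le> s" "\<forall>x\<in>Q - R. w x \<ge> 0" using Suc.prems(3,4) by auto
  ultimately obtain G where G: "\<forall>i<j. G i \<subseteq> Q - R \<and> sum w (G i) \<ge> s"
     "\<forall>i<j. \<forall>i'<j. i \<noteq> i' \<longrightarrow> G i \<inter> G i' = {}"
    using Suc.IH[of "Q - R"] Suc.prems(2) by blast
  define G' where "G' = G(j := R)"
  have "\<forall>i<Suc j. G' i \<subseteq> Q \<and> sum w (G' i) \<ge> s"
  proof (intro allI impI)
    fix i assume "i < Suc j"
    then show "G' i \<subseteq> Q \<and> sum w (G' i) \<ge> s"
    proof (cases "i = j")
      case True then show ?thesis using R unfolding G'_def by auto
    next
      case False with \<open>i < Suc j\<close> have "i < j" by simp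
      then show ?thesis using G(1) unfolding G'_def by auto
    qed
  qed
  moreover have "\<forall>i<Suc j. \<forall>i'<Suc j. i \<noteq> i' \<longrightarrow> G' i \<inter> G' i' = {}"
  proof (intro allI impI)
    fix i i' assume h: "i < Suc j" "i' < Suc j" "i \<noteq> i'"
    show "G' i \<inter> G' i' = {}"
    proof (cases "i = j")
      case True
      then have "i' < j" using h by simp
      then have "G i' \<subseteq> Q - R" using G(1) by blast
      then show ?thesis using True h unfolding G'_def by auto
    next
      case False
      then have i: "i < j" using h by simp
      show ?thesis
      proof (cases "i' = j")
        case True then show ?thesis using i G(1) unfolding G'_def by auto
      next
        case False then show ?thesis using i h G(2) unfolding G'_def by auto
      qed
    qed
  qed
  ultimately show ?case by blast
qed

theorem lemma3p1:
  fixes U :: "'a set" and V :: "'b set" and E :: "('a \<times> 'b) set"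
    and P :: "'b set set" and k :: nat
  assumes "k > 0"
    and "finite U" and "finite V"
    and "E \<subseteq> U \<times> V"
    and "partition_on V P"
    and "\<forall>X\<in>P. real (card X) \<le> real (card V) / (2 * real k)"
    and "\<forall>u\<in>U. card {X\<in>P. \<exists>v\<in>X. (u, v) \<in> E} < k"
  shows "\<exists>A B. A \<subseteq> U \<and> B \<subseteq> V
           \<and> real (card A) \<ge> real (card U) / real k
           \<and> real (card B) \<ge> real (card V) / (2 * real k)
           \<and> (\<forall>a\<in>A. \<forall>b\<in>B. (a, b) \<notin> E)"
proof -
  define s where "s = real (card V) / (2 * real k)"
  have s0: "s \<ge> 0" unfolding s_def by simp
  have UP: "\<Union>P = V" and dP: "disjoint P" using assms(5) unfolding partition_on_def by auto
  have finP: "finite P" using assms(3) UP by (metis finite_UnionD)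
  have finX: "\<forall>X\<in>P. finite X" using assms(3) UP by (metis Union_upper finite_subset)
  have cardV: "card V = sum card P"
    using card_Union_disjoint[of P] dP finX UP by (simp add: disjoint_def pairwise_def disjnt_def)
  have "sum (\<lambda>X. real (card X)) P \<ge> 2 * real k * s"
    using cardV assms(1) unfolding s_def by simp
  then obtain G :: "nat \<Rightarrow> 'b set set" where G: "\<forall>i<k. G i \<subseteq> P \<and> sum (\<lambda>X. real (card X)) (G i) \<ge> s"
     "\<forall>i<k. \<forall>i'<k. i \<noteq> i' \<longrightarrow> G i \<inter> G i' = {}"
    using groups[of P s "\<lambda>X. real (card X)" k] finP s0 assms(6) unfolding s_def by auto
  define M where "M i = {u\<in>U. \<forall>X\<in>G i. \<forall>v\<in>X. (u, v) \<notin> E}" for i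
  have cover: "U \<subseteq> (\<Union>i<k. M i)"
  proof
    fix u assume uU: "u \<in> U"
    define T where "T = {i. i < k \<and> (\<exists>X\<in>G i. \<exists>v\<in>X. (u, v) \<in> E)}"
    define g where "g i = (SOME X. X \<in> G i \<and> (\<exists>v\<in>X. (u, v) \<in> E))" for i
    have gT: "\<forall>i\<in>T. g i \<in> G i \<and> (\<exists>v\<in>g i. (u, v) \<in> E)"
    proof
      fix i assume "i \<in> T"
      then have "\<exists>X. X \<in> G i \<and> (\<exists>v\<in>X. (u, v) \<in> E)" unfolding T_def by blast
      then show "g i \<in> G i \<and> (\<exists>v\<in>g i. (u, v) \<in> E)" unfolding g_def by (rule someI_ex)
    qed
    have "inj_on g T"
    proof (rule inj_onI)
      fix i i' assume "i \<in> T" "i' \<in> T" "g i = g i'"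
      then have k: "i < k" "i' < k" unfolding T_def by auto
      have "g i \<in> G i" "g i' \<in> G i'" using gT \<open>i \<in> T\<close> \<open>i' \<in> T\<close> by auto
      then have "G i \<inter> G i' \<noteq> {}" using \<open>g i = g i'\<close> by auto
      then show "i = i'" using G(2) k by blast
    qed
    moreover have "g ` T \<subseteq> {X\<in>P. \<exists>v\<in>X. (u, v) \<in> E}"
    proof
      fix Y assume "Y \<in> g ` T"
      then obtain i where "i \<in> T" "Y = g i" by auto
      then have "i < k" "Y \<in> G i" "\<exists>v\<in>Y. (u, v) \<in> E" using gT unfolding T_def by auto
      then show "Y \<in> {X\<in>P. \<exists>v\<in>X. (u, v) \<in> E}" using G(1) by blast
    qed
    moreover have "finite {X\<in>P. \<exists>v\<in>X. (u, v) \<in> E}" using finP by simp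
    ultimately have "card T \<le> card {X\<in>P. \<exists>v\<in>X. (u, v) \<in> E}"
      by (meson card_inj_on_le)
    then have "card T < k" using assms(7) uU by auto
    then have "T \<noteq> {..<k}" by auto
    moreover have "T \<subseteq> {..<k}" unfolding T_def by auto
    ultimately obtain i where "i < k" "i \<notin> T" by auto
    then have "u \<in> M i" unfolding M_def T_def using uU by auto
    then show "u \<in> (\<Union>i<k. M i)" using \<open>i < k\<close> by blast
  qed
  have "card U \<le> card (\<Union>i<k. M i)"
  proof -
    have "finite (\<Union>i<k. M i)" using assms(2) unfolding M_def by auto
    then show ?thesis using card_mono cover by blast
  qed
  also have "\<dots> \<le> (\<Sum>i<k. card (M i))" by (rule card_UN_le) simp
  finally have sumU: "real (card U) \<le> (\<Sum>i<k. real (card (M i)))" by (metis of_nat_le_iff of_nat_sum)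
  have "\<exists>i<k. real (card (M i)) \<ge> real (card U) / real k"
  proof (rule ccontr)
    assume "\<not> ?thesis"
    then have "\<forall>i\<in>{..<k}. real (card (M i)) < real (card U) / real k" by auto
    then have "(\<Sum>i<k. real (card (M i))) < (\<Sum>i<k. real (card U) / real k)"
      using assms(1) by (intro sum_strict_mono) auto
    also have "\<dots> = real (card U)" using assms(1) by simp
    finally show False using sumU by simp
  qed
  then obtain i where i: "i < k" "real (card (M i)) \<ge> real (card U) / real k" by auto
  define B where "B = \<Union>(G i)"
  have "B \<subseteq> V" using G(1) i(1) UP unfolding B_def by auto
  moreover have "card B = sum card (G i)"
  proof -
    have GiP: "G i \<subseteq> P" using G(1) i(1) by blast
    have "pairwise disjnt (G i)" using dP GiP unfolding disjoint_def pairwise_def disjnt_def by blast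
    moreover have "\<forall>X\<in>G i. finite X" using finX GiP by blast
    ultimately show ?thesis unfolding B_def by (intro card_Union_disjoint) auto
  qed
  then have "real (card B) \<ge> s" using G(1) i(1) by simp
  moreover have "M i \<subseteq> U" unfolding M_def by auto
  moreover have "\<forall>a\<in>M i. \<forall>b\<in>B. (a, b) \<notin> E" unfolding M_def B_def by auto
  ultimately show ?thesis using i(2) unfolding s_def by blast
qed

end
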